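(* Let $n \geq 3$ and let $\Omega = \bigcap_{m=0}^q \{u_m \leq 0\} \subset \mathbb{R}^n$ be a compact convex polytope with non-empty interior satisfying the standing assumptions described in the context. Let $\Lambda > 1$ be a constant such that for every $x \in \Omega$ and all nonnegative reals $a_0,\dots,a_q$ with $a_i = 0$ whenever $u_i(x) \leq -2\Lambda^{-1}$, one has $\sum_{i=0}^q a_i \leq \Lambda |\sum_{i=0}^q a_i N_i|$. Then there exists a constant $\Xi \in (2\Lambda,\infty)$ with the following property: whenever $1 \leq k \leq q$, $x \in \Omega$ satisfies $-2\Xi^{-1} \leq u_k(x) \leq 0$, and $a_0,\dots,a_{k-1}$ are nonnegative real numbers such that $a_i = 0$ for all $0 \leq i \leq k-1$ with $u_i(x) \leq -2\Xi^{-1}$, we have \[\sum_{i=0}^{k-1} a_i \leq \Xi \, \Big| \Big( \sum_{i=0}^{k-1} a_i N_i \Big) \wedge N_k \Big|.\]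
   Context: Here $u_0,\dots,u_q$ are non-constant linear (affine) functions on $\mathbb{R}^n$ and $\Omega = \bigcap_{m=0}^q\{u_m\le 0\}$ is compact, convex, with non-empty interior. Standing assumptions: (a) for each $k$, the set $\{u_k>0\}\cap\bigcap_{m\neq k}\{u_m\le 0\}$ is non-empty; (b) the Euclidean gradient of each $u_k$ is a unit vector $N_k\in S^{n-1}$; (c) for $0\le j<k\le q$, if there exists $x\in\Omega$ with $u_j(x)=u_k(x)=0$, then $\langle N_j,N_k\rangle\le 0$. For vectors $v,w\in\mathbb{R}^n$, $|v\wedge w|$ denotes the Euclidean norm of the bivector, i.e. $|v\wedge w|^2=|v|^2|w|^2-\langle v,w\rangle^2$. *)

theory Defs
  imports "HOL-Analysis.Analysis"
begin

text \<open>Euclidean norm of the bivector v wedge w.\<close>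
definition wedge_norm :: "'a::real_inner \<Rightarrow> 'a \<Rightarrow> real" where
  "wedge_norm v w = sqrt ((norm v)\<^sup>2 * (norm w)\<^sup>2 - (v \<bullet> w)\<^sup>2)"

definition aff :: "(nat \<Rightarrow> 'a::real_inner) \<Rightarrow> (nat \<Rightarrow> real) \<Rightarrow> nat \<Rightarrow> 'a \<Rightarrow> real" where
  "aff N c m x = N m \<bullet> x + c m"

definition polytope :: "(nat \<Rightarrow> 'a::real_inner) \<Rightarrow> (nat \<Rightarrow> real) \<Rightarrow> nat \<Rightarrow> 'a set" where
  "polytope N c q = {x. \<forall>m\<le>q. aff N c m x \<le> 0}"

end

theory Submission
  imports Defs
begin

lemma pair_sep:
  fixes N :: "nat \<Rightarrow> 'a::euclidean_space" and c :: "nat \<Rightarrow> real"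
  assumes cpt: "compact (polytope N c q)" and jq: "j \<le> q" and kq: "k \<le> q"
  shows "eventually (\<lambda>e. (\<exists>x\<in>polytope N c q. aff N c j x = 0 \<and> aff N c k x = 0) \<or>
            (\<forall>x\<in>polytope N c q. min (aff N c j x) (aff N c k x) \<le> -e)) (at_right 0)"
proof (cases "(\<exists>x\<in>polytope N c q. aff N c j x = 0 \<and> aff N c k x = 0) \<or> polytope N c q = {}")
  case True
  then show ?thesis by (auto intro: always_eventually)
next
  case False
  let ?g = "\<lambda>x. min (aff N c j x) (aff N c k x)"
  have "continuous_on (polytope N c q) ?g"
    unfolding aff_def by (intro continuous_intros)
  then obtain x0 where x0: "x0 \<in> polytope N c q" "\<And>y. y \<in> polytope N c q \<Longrightarrow> ?g y \<le> ?g x0"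
    using continuous_attains_sup[OF cpt] False by blast
  have neg: "?g x0 < 0"
  proof -
    have "aff N c j x0 \<le> 0" "aff N c k x0 \<le> 0"
      using x0(1) jq kq unfolding polytope_def by auto
    then show ?thesis using False x0(1) by force
  qed
  show ?thesis
    unfolding eventually_at_right_field
    using neg x0(2) by (intro exI[of _ "- ?g x0"]) force
qed

theorem lemma2p4:
  fixes N :: "nat \<Rightarrow> 'a::euclidean_space" and c :: "nat \<Rightarrow> real"
    and q :: nat and \<Lambda> :: real
  assumes dim: "DIM('a) \<ge> 3"
    and cpt: "compact (polytope N c q)"
    and cvx: "convex (polytope N c q)"
    and int: "interior (polytope N c q) \<noteq> {}"
    and sa: "\<And>k. k \<le> q \<Longrightarrow>
               (\<exists>x. aff N c k x > 0 \<and> (\<forall>m\<le>q. m \<noteq> k \<longrightarrow> aff N c m x \<le> 0))"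
    and sb: "\<And>k. k \<le> q \<Longrightarrow> norm (N k) = 1"
    and sc: "\<And>j k. j < k \<Longrightarrow> k \<le> q \<Longrightarrow>
               (\<exists>x\<in>polytope N c q. aff N c j x = 0 \<and> aff N c k x = 0) \<Longrightarrow> N j \<bullet> N k \<le> 0"
    and Lgt: "\<Lambda> > 1"
    and L: "\<And>x a. x \<in> polytope N c q \<Longrightarrow> (\<forall>i\<le>q. a i \<ge> (0::real)) \<Longrightarrow>
               (\<forall>i\<le>q. aff N c i x \<le> -2 / \<Lambda> \<longrightarrow> a i = 0) \<Longrightarrow>
               (\<Sum>i\<le>q. a i) \<le> \<Lambda> * norm (\<Sum>i\<le>q. a i *\<^sub>R N i)"
  shows "\<exists>\<Xi>>2 * \<Lambda>. \<forall>k x a. 1 \<le> k \<and> k \<le> q \<and> x \<in> polytope N c q \<and>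
             -2 / \<Xi> \<le> aff N c k x \<and> aff N c k x \<le> 0 \<and>
             (\<forall>i<k. a i \<ge> (0::real)) \<and>
             (\<forall>i<k. aff N c i x \<le> -2 / \<Xi> \<longrightarrow> a i = 0) \<longrightarrow>
             (\<Sum>i<k. a i) \<le> \<Xi> * wedge_norm (\<Sum>i<k. a i *\<^sub>R N i) (N k)"
proof -
  let ?\<Omega> = "polytope N c q"
  let ?P = "{..q} \<times> {..q}"
  have "eventually (\<lambda>e. \<forall>p\<in>?P. (\<exists>x\<in>?\<Omega>. aff N c (fst p) x = 0 \<and> aff N c (snd p) x = 0) \<or>
            (\<forall>x\<in>?\<Omega>. min (aff N c (fst p) x) (aff N c (snd p) x) \<le> -e)) (at_right 0)"
  proof (rule eventually_ball_finite)
    show "finite ?P" by simp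
    show "\<forall>p\<in>?P. eventually (\<lambda>e. (\<exists>x\<in>?\<Omega>. aff N c (fst p) x = 0 \<and> aff N c (snd p) x = 0) \<or>
            (\<forall>x\<in>?\<Omega>. min (aff N c (fst p) x) (aff N c (snd p) x) \<le> -e)) (at_right 0)"
    proof
      fix p assume "p \<in> ?P"
      then obtain j k where p: "p = (j, k)" "j \<le> q" "k \<le> q" by auto
      show "eventually (\<lambda>e. (\<exists>x\<in>?\<Omega>. aff N c (fst p) x = 0 \<and> aff N c (snd p) x = 0) \<or>
            (\<forall>x\<in>?\<Omega>. min (aff N c (fst p) x) (aff N c (snd p) x) \<le> -e)) (at_right 0)"
        using pair_sep[OF cpt p(2) p(3)] by (simp add: p(1))
    qed
  qed
  then obtain b :: real where b: "b > 0" and bP: "\<And>y. y > 0 \<Longrightarrow> y < b \<Longrightarrow>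
      \<forall>p\<in>?P. (\<exists>x\<in>?\<Omega>. aff N c (fst p) x = 0 \<and> aff N c (snd p) x = 0) \<or>
            (\<forall>x\<in>?\<Omega>. min (aff N c (fst p) x) (aff N c (snd p) x) \<le> -y)"
    unfolding eventually_at_right_field by auto
  define e where "e = b / 2"
  have e: "e > 0" "e < b" using b by (auto simp: e_def)
  have sep: "\<And>j k. j \<le> q \<Longrightarrow> k \<le> q \<Longrightarrow> (\<exists>x\<in>?\<Omega>. aff N c j x = 0 \<and> aff N c k x = 0) \<or>
            (\<forall>x\<in>?\<Omega>. min (aff N c j x) (aff N c k x) \<le> -e)"
    using bP[OF e] by force
  define \<Xi> where "\<Xi> = 2 * \<Lambda> + 4 / e"
  have Xgt: "\<Xi> > 2 * \<Lambda>" using e by (simp add: \<Xi>_def)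
  have Xpos: "\<Xi> > 0" using Xgt Lgt by linarith
  have Xe: "2 / \<Xi> < e"
  proof -
    have "4 / e < \<Xi>" using Lgt by (simp add: \<Xi>_def)
    hence "4 < \<Xi> * e" using e by (simp add: field_simps)
    thus ?thesis using Xpos e by (simp add: field_simps)
  qed
  have XL: "2 / \<Xi> < 2 / \<Lambda>" using Xgt Lgt by (simp add: frac_less2)
  show ?thesis
  proof (intro exI[of _ \<Xi>] conjI Xgt allI impI)
    fix k x and a :: "nat \<Rightarrow> real"
    assume H: "1 \<le> k \<and> k \<le> q \<and> x \<in> ?\<Omega> \<and> -2 / \<Xi> \<le> aff N c k x \<and> aff N c k x \<le> 0 \<and>
             (\<forall>i<k. a i \<ge> 0) \<and> (\<forall>i<k. aff N c i x \<le> -2 / \<Xi> \<longrightarrow> a i = 0)"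
    hence kq: "k \<le> q" and xO: "x \<in> ?\<Omega>" and uk: "-2 / \<Xi> \<le> aff N c k x"
      and a0: "\<And>i. i < k \<Longrightarrow> a i \<ge> 0"
      and aZ: "\<And>i. i < k \<Longrightarrow> aff N c i x \<le> -2 / \<Xi> \<Longrightarrow> a i = 0" by auto
    define v where "v = (\<Sum>i<k. a i *\<^sub>R N i)"
    define s where "s = - (v \<bullet> N k)"
    have terms: "a i * (N i \<bullet> N k) \<le> 0" if i: "i < k" for i
    proof (cases "a i = 0")
      case True then show ?thesis by simp
    next
      case False
      hence ui: "aff N c i x > -2 / \<Xi>" using aZ[OF i] by force
      have "\<not> (min (aff N c i x) (aff N c k x) \<le> -e)" using ui uk Xe by auto
      hence "\<exists>x\<in>?\<Omega>. aff N c i x = 0 \<and> aff N c k x = 0"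
        using sep[of i k] i kq xO by auto
      hence "N i \<bullet> N k \<le> 0" using sc[OF i kq] by blast
      thus ?thesis using a0[OF i] by (simp add: mult_nonneg_nonpos)
    qed
    have "v \<bullet> N k = (\<Sum>i<k. a i * (N i \<bullet> N k))"
      unfolding v_def by (simp add: inner_sum_left)
    also have "\<dots> \<le> 0" using terms by (intro sum_nonpos) auto
    finally have s0: "s \<ge> 0" by (simp add: s_def)
    define bb where "bb i = (if i < k then a i else 0) + (if i = k then s else 0)" for i
    have sb1: "(\<Sum>i\<le>q. bb i) = (\<Sum>i<k. a i) + s"
    proof -
      have "(\<Sum>i\<le>q. bb i) = (\<Sum>i\<le>q. (if i \<in> {..<k} then a i else 0)) + (\<Sum>i\<le>q. (if i \<in> {k} then s else 0))"
        unfolding bb_def by (simp add: sum.distrib)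
      also have "\<dots> = (\<Sum>i\<in>{..q} \<inter> {..<k}. a i) + (\<Sum>i\<in>{..q} \<inter> {k}. s)"
        by (simp only: sum.inter_restrict[symmetric] finite_atMost)
      also have "{..q} \<inter> {..<k} = {..<k}" using kq by auto
      also have "{..q} \<inter> {k} = {k}" using kq by auto
      finally show ?thesis by simp
    qed
    have sb2: "(\<Sum>i\<le>q. bb i *\<^sub>R N i) = v + s *\<^sub>R N k"
    proof -
      have "(\<Sum>i\<le>q. bb i *\<^sub>R N i) = (\<Sum>i\<le>q. (if i \<in> {..<k} then a i *\<^sub>R N i else 0)) + (\<Sum>i\<le>q. (if i \<in> {k} then s *\<^sub>R N i else 0))"
        unfolding sum.distrib[symmetric] by (rule sum.cong) (auto simp: bb_def)
      also have "\<dots> = (\<Sum>i\<in>{..q} \<inter> {..<k}. a i *\<^sub>R N i) + (\<Sum>i\<in>{..q} \<inter> {k}. s *\<^sub>R N i)"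
        by (simp only: sum.inter_restrict[symmetric] finite_atMost)
      also have "{..q} \<inter> {..<k} = {..<k}" using kq by auto
      also have "{..q} \<inter> {k} = {k}" using kq by auto
      finally show ?thesis by (simp add: v_def)
    qed
    have nk: "norm (N k) = 1" using sb[OF kq] .
    have wn: "norm (v + s *\<^sub>R N k) = wedge_norm v (N k)"
    proof -
      have NN: "N k \<bullet> N k = 1" using nk by (simp add: norm_eq_1)
      have "(norm (v + s *\<^sub>R N k))\<^sup>2 = (v + s *\<^sub>R N k) \<bullet> (v + s *\<^sub>R N k)"
        by (simp add: power2_norm_eq_inner)
      also have "\<dots> = v \<bullet> v + 2 * s * (v \<bullet> N k) + s * s * (N k \<bullet> N k)"
        by (simp add: inner_add_left inner_add_right inner_commute algebra_simps)
      also have "\<dots> = (norm v)\<^sup>2 * (norm (N k))\<^sup>2 - (v \<bullet> N k)\<^sup>2"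
        using NN nk by (simp add: s_def power2_norm_eq_inner[symmetric] power2_eq_square)
      finally have "(norm (v + s *\<^sub>R N k))\<^sup>2 = (norm v)\<^sup>2 * (norm (N k))\<^sup>2 - (v \<bullet> N k)\<^sup>2" .
      thus ?thesis unfolding wedge_norm_def by (simp add: real_sqrt_unique)
    qed
    have Lb: "(\<Sum>i\<le>q. bb i) \<le> \<Lambda> * norm (\<Sum>i\<le>q. bb i *\<^sub>R N i)"
    proof (rule L[OF xO])
      show "\<forall>i\<le>q. 0 \<le> bb i" using a0 s0 by (auto simp: bb_def)
      show "\<forall>i\<le>q. aff N c i x \<le> -2 / \<Lambda> \<longrightarrow> bb i = 0"
      proof (intro allI impI)
        fix i assume "i \<le> q" "aff N c i x \<le> -2 / \<Lambda>"
        hence "aff N c i x \<le> -2 / \<Xi>" using XL by linarith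
        moreover have "i \<noteq> k" using uk \<open>aff N c i x \<le> -2 / \<Lambda>\<close> XL by auto
        ultimately show "bb i = 0" using aZ by (auto simp: bb_def)
      qed
    qed
    have "(\<Sum>i<k. a i) \<le> \<Lambda> * wedge_norm v (N k)" using Lb sb1 sb2 wn s0 by simp
    also have "\<dots> \<le> \<Xi> * wedge_norm v (N k)"
      using Xgt Lgt wn[symmetric] by (intro mult_right_mono) auto
    finally show "(\<Sum>i<k. a i) \<le> \<Xi> * wedge_norm (\<Sum>i<k. a i *\<^sub>R N i) (N k)" by (simp add: v_def)
  qed
qed

end
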